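(* Let $(\mathbf C,I)$ be a finite-type based chain complex of real inner product spaces and let $M=\{\alpha\to\beta\}$ be a single $(n+1,n)$-pairing ($\alpha\in I_{n+1}$, $\beta\in I_n$, $\partial_{\beta,\alpha}$ an isomorphism). Then for all $i$, $$\dim\operatorname{Im}(\partial^M_i)^\dagger=\dim\operatorname{Im}\partial^M_i=\begin{cases}\dim\operatorname{Im}\partial_i-\dim C_\beta & i=n+1,\\ \dim\operatorname{Im}\partial_i & \text{otherwise,}\end{cases}$$ where $\partial^M$ is the boundary of the Morse complex $\mathbf C^M$ (with the restricted inner product).
   Context: Based chain complex: chain complex $(\mathbf C,\partial)$ of finite-dimensional real inner product spaces $\mathbf C_n$, $n\ge0$, with disjoint finite index sets $I_n$ and $\mathbf C_n=\bigoplus_{\sigma\in I_n}C_\sigma$; $\partial_{\tau,\sigma}=\pi_\tau\partial i_\sigma:C_\sigma\to C_\tau$. For the single pairing $M=\{\alpha\to\beta\}$, the Morse complex $\mathbf C^M$ has summands $C_\sigma$ for $\sigma\in I\setminus\{\alpha,\beta\}$ and boundary components $\partial^M_{\tau,\sigma}=\partial_{\tau,\sigma}-\partial_{\tau,\alpha}\partial_{\beta,\alpha}^{-1}\partial_{\beta,\sigma}$; it is chain homotopy equivalent to $\mathbf C$. $\dagger$ denotes adjoint. *)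

theory Defs
  imports "HOL-Analysis.Analysis"
begin

text \<open>A based chain complex is modelled inside an ambient finite-dimensional real inner
product space 'v: cells \<sigma> \<in> I (finite), with degree deg \<sigma> (so I_n = {\<sigma>\<in>I. deg \<sigma> = n}),
summands Csp \<sigma> (pairwise orthogonal subspaces of 'v), C_n = span of the summands of degree n,
and boundary bd, a linear map of 'v whose behaviour on the complex is what matters.\<close>

definition orth_proj :: "'v::euclidean_space set \<Rightarrow> 'v \<Rightarrow> 'v" where
  "orth_proj S x = (THE y. y \<in> S \<and> (\<forall>z\<in>S. (x - y) \<bullet> z = 0))"

definition chain_space :: "('i \<Rightarrow> 'v::euclidean_space set) \<Rightarrow> 'i set \<Rightarrow> 'v set" where
  "chain_space Csp J = span (\<Union>\<sigma>\<in>J. Csp \<sigma>)"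

definition Cn :: "'i set \<Rightarrow> ('i \<Rightarrow> nat) \<Rightarrow> ('i \<Rightarrow> 'v::euclidean_space set) \<Rightarrow> nat \<Rightarrow> 'v set" where
  "Cn I deg Csp k = chain_space Csp {\<sigma>\<in>I. deg \<sigma> = k}"

definition based_chain_complex ::
  "'i set \<Rightarrow> ('i \<Rightarrow> nat) \<Rightarrow> ('i \<Rightarrow> 'v::euclidean_space set) \<Rightarrow> ('v \<Rightarrow> 'v) \<Rightarrow> bool" where
  "based_chain_complex I deg Csp bd \<longleftrightarrow>
     finite I \<and>
     (\<forall>\<sigma>\<in>I. subspace (Csp \<sigma>)) \<and>
     (\<forall>\<sigma>\<in>I. \<forall>\<tau>\<in>I. \<sigma> \<noteq> \<tau> \<longrightarrow> (\<forall>x\<in>Csp \<sigma>. \<forall>y\<in>Csp \<tau>. x \<bullet> y = 0)) \<and>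
     linear bd \<and>
     (\<forall>\<sigma>\<in>I. \<forall>x\<in>Csp \<sigma>. bd x \<in> (if deg \<sigma> = 0 then {0} else Cn I deg Csp (deg \<sigma> - 1))) \<and>
     (\<forall>x\<in>chain_space Csp I. bd (bd x) = 0)"

definition bd_comp :: "('i \<Rightarrow> 'v::euclidean_space set) \<Rightarrow> ('v \<Rightarrow> 'v) \<Rightarrow> 'i \<Rightarrow> 'v \<Rightarrow> 'v" where
  "bd_comp Csp bd \<tau> x = orth_proj (Csp \<tau>) (bd x)"

definition single_pairing ::
  "'i set \<Rightarrow> ('i \<Rightarrow> nat) \<Rightarrow> ('i \<Rightarrow> 'v::euclidean_space set) \<Rightarrow> ('v \<Rightarrow> 'v) \<Rightarrow> nat \<Rightarrow> 'i \<Rightarrow> 'i \<Rightarrow> bool" where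
  "single_pairing I deg Csp bd n \<alpha> \<beta> \<longleftrightarrow>
     \<alpha> \<in> I \<and> \<beta> \<in> I \<and> deg \<alpha> = n + 1 \<and> deg \<beta> = n \<and>
     bij_betw (bd_comp Csp bd \<beta>) (Csp \<alpha>) (Csp \<beta>)"

text \<open>Morse complex summands C^M_k and boundary
  \<partial>^M_{\<tau>,\<sigma>} = \<partial>_{\<tau>,\<sigma>} - \<partial>_{\<tau>,\<alpha>} \<partial>_{\<beta>,\<alpha>}^{-1} \<partial>_{\<beta>,\<sigma>}, assembled over \<tau> \<notin> {\<alpha>,\<beta>}.\<close>
definition CM :: "'i set \<Rightarrow> ('i \<Rightarrow> nat) \<Rightarrow> ('i \<Rightarrow> 'v::euclidean_space set) \<Rightarrow> 'i \<Rightarrow> 'i \<Rightarrow> nat \<Rightarrow> 'v set" where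
  "CM I deg Csp \<alpha> \<beta> k = chain_space Csp {\<sigma>\<in>I - {\<alpha>, \<beta>}. deg \<sigma> = k}"

definition morse_bd :: "'i set \<Rightarrow> ('i \<Rightarrow> 'v::euclidean_space set) \<Rightarrow> ('v \<Rightarrow> 'v) \<Rightarrow> 'i \<Rightarrow> 'i \<Rightarrow> 'v \<Rightarrow> 'v" where
  "morse_bd I Csp bd \<alpha> \<beta> x =
     orth_proj (chain_space Csp (I - {\<alpha>, \<beta>}))
       (bd x - bd (inv_into (Csp \<alpha>) (bd_comp Csp bd \<beta>) (bd_comp Csp bd \<beta> x)))"

definition CM_tgt :: "'i set \<Rightarrow> ('i \<Rightarrow> nat) \<Rightarrow> ('i \<Rightarrow> 'v::euclidean_space set) \<Rightarrow> 'i \<Rightarrow> 'i \<Rightarrow> nat \<Rightarrow> 'v set" where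
  "CM_tgt I deg Csp \<alpha> \<beta> i = (if i = 0 then {0} else CM I deg Csp \<alpha> \<beta> (i - 1))"

definition restr_adjoint :: "'v::euclidean_space set \<Rightarrow> ('v \<Rightarrow> 'v) \<Rightarrow> 'v \<Rightarrow> 'v" where
  "restr_adjoint V T y = (THE u. u \<in> V \<and> (\<forall>x\<in>V. T x \<bullet> y = x \<bullet> u))"

end

theory Submission
  imports Defs
begin


lemma orth_proj_unique:
  fixes S :: "'v::euclidean_space set"
  assumes "subspace S" "y1 \<in> S" "\<forall>z\<in>S. (x - y1) \<bullet> z = 0" "y2 \<in> S" "\<forall>z\<in>S. (x - y2) \<bullet> z = 0"
  shows "y1 = y2"
proof -
  have d: "y1 - y2 \<in> S" using assms subspace_diff by blast
  have "(x - y1) \<bullet> (y1 - y2) = 0" "(x - y2) \<bullet> (y1 - y2) = 0" using assms d by auto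
  then have "(y1 - y2) \<bullet> (y1 - y2) = 0" by (simp add: inner_diff_left)
  then show ?thesis by simp
qed

lemma orth_proj_char:
  fixes S :: "'v::euclidean_space set"
  assumes "subspace S"
  shows "orth_proj S x \<in> S \<and> (\<forall>z\<in>S. (x - orth_proj S x) \<bullet> z = 0)"
proof -
  obtain y z where y: "y \<in> span S" and z: "\<And>w. w \<in> span S \<Longrightarrow> orthogonal z w" and x: "x = y + z"
    using orthogonal_subspace_decomp_exists by blast
  have sS: "span S = S" using assms by simp
  have P: "y \<in> S \<and> (\<forall>w\<in>S. (x - y) \<bullet> w = 0)"
    using y z x sS by (auto simp: orthogonal_def)
  show ?thesis unfolding orth_proj_def
    apply (rule theI[where a = y])
    using P apply blast
    using P orth_proj_unique[OF assms] by blast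
qed

lemma orth_proj_eq:
  fixes S :: "'v::euclidean_space set"
  assumes "subspace S" "y \<in> S" "\<forall>z\<in>S. (x - y) \<bullet> z = 0"
  shows "orth_proj S x = y"
  using orth_proj_char[OF assms(1), of x] orth_proj_unique[OF assms(1)] assms by blast

lemma orth_proj_in: "subspace S \<Longrightarrow> orth_proj S x \<in> S"
  using orth_proj_char by blast

lemma orth_proj_id: "subspace S \<Longrightarrow> y \<in> S \<Longrightarrow> orth_proj S y = y"
  by (rule orth_proj_eq) auto

lemma orth_proj_add_orth:
  assumes "subspace S" "y \<in> S" "\<forall>z\<in>S. w \<bullet> z = 0"
  shows "orth_proj S (y + w) = y"
  by (rule orth_proj_eq) (use assms in auto)

lemma orth_proj_zero:
  assumes "subspace S" "\<forall>z\<in>S. w \<bullet> z = 0"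
  shows "orth_proj S w = 0"
  using orth_proj_add_orth[OF assms(1) subspace_0[OF assms(1)] assms(2)] by simp

lemma orth_proj_linear:
  fixes S :: "'v::euclidean_space set"
  assumes "subspace S"
  shows "linear (orth_proj S)"
proof (rule linearI)
  fix x y :: 'v
  show "orth_proj S (x + y) = orth_proj S x + orth_proj S y"
    apply (rule orth_proj_eq[OF assms])
    using orth_proj_char[OF assms, of x] orth_proj_char[OF assms, of y] assms
    by (auto simp: subspace_add inner_diff_left inner_add_left algebra_simps)
next
  fix c :: real and x :: 'v
  show "orth_proj S (c *\<^sub>R x) = c *\<^sub>R orth_proj S x"
    apply (rule orth_proj_eq[OF assms])
    using orth_proj_char[OF assms, of x] assms
    by (auto simp: subspace_scale inner_diff_left algebra_simps)
qed

lemma rank_le: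
  fixes S T :: "'v::euclidean_space \<Rightarrow> 'v"
  assumes A: "subspace A" and B: "subspace B" and S: "linear S" and T: "linear T"
    and SA: "S ` A \<subseteq> B" and TB: "T ` B \<subseteq> A"
    and adj: "\<forall>a\<in>A. \<forall>b\<in>B. S a \<bullet> b = a \<bullet> T b"
  shows "dim (S ` A) \<le> dim (T ` B)"
proof -
  let ?U = "T ` B"
  have U: "subspace ?U" using linear_subspace_image[OF T B] .
  have "S ` A \<subseteq> S ` ?U"
  proof
    fix v assume "v \<in> S ` A"
    then obtain a where a: "a \<in> A" "v = S a" by auto
    define p where "p = orth_proj ?U a"
    have p: "p \<in> ?U" "\<forall>z\<in>?U. (a - p) \<bullet> z = 0" using orth_proj_char[OF U] p_def by auto
    have pA: "p \<in> A" using p TB by auto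
    have qA: "a - p \<in> A" using a pA A subspace_diff by blast
    have "\<forall>b\<in>B. S (a - p) \<bullet> b = 0" using adj qA p(2) by auto
    moreover have "S (a - p) \<in> B" using SA qA by auto
    ultimately have "S (a - p) = 0" by (metis inner_eq_zero_iff)
    then have "S a = S p" using S by (simp add: linear_diff)
    then show "v \<in> S ` ?U" using a p by auto
  qed
  moreover have "S ` ?U \<subseteq> S ` A" using TB by auto
  ultimately have "S ` A = S ` ?U" by auto
  then have "dim (S ` A) = dim (S ` ?U)" by simp
  also have "\<dots> \<le> dim ?U" using dim_image_le[OF S] .
  finally show ?thesis .
qed

lemma restr_adjoint_eq:
  fixes L :: "'v::euclidean_space \<Rightarrow> 'v"
  assumes L: "linear L" and V: "subspace V"
  shows "restr_adjoint V L y = orth_proj V (adjoint L y)"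
proof -
  let ?u = "orth_proj V (adjoint L y)"
  have P: "?u \<in> V \<and> (\<forall>x\<in>V. L x \<bullet> y = x \<bullet> ?u)"
  proof -
    have c: "?u \<in> V" "\<forall>z\<in>V. (adjoint L y - ?u) \<bullet> z = 0" using orth_proj_char[OF V] by auto
    have "\<forall>x\<in>V. L x \<bullet> y = x \<bullet> ?u"
    proof
      fix x assume x: "x \<in> V"
      have "L x \<bullet> y = x \<bullet> adjoint L y" using adjoint_works[OF L] by simp
      also have "\<dots> = x \<bullet> ?u"
      proof -
        have "(adjoint L y - ?u) \<bullet> x = 0" using c(2) x by blast
        then show ?thesis by (metis inner_commute inner_diff_right right_minus_eq)
      qed
      finally show "L x \<bullet> y = x \<bullet> ?u" .
    qed
    with c show ?thesis by auto
  qed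
  show ?thesis unfolding restr_adjoint_def
  proof (rule the_equality)
    show "?u \<in> V \<and> (\<forall>x\<in>V. L x \<bullet> y = x \<bullet> ?u)" by (rule P)
  next
    fix u assume u: "u \<in> V \<and> (\<forall>x\<in>V. L x \<bullet> y = x \<bullet> u)"
    have d: "u - ?u \<in> V" using u P V subspace_diff by blast
    have "(u - ?u) \<bullet> u = (u - ?u) \<bullet> ?u" using u P d by (metis inner_commute)
    then have "(u - ?u) \<bullet> (u - ?u) = 0" by (simp add: inner_diff_right)
    then show "u = ?u" by simp
  qed
qed

lemma adj_rank:
  fixes L :: "'v::euclidean_space \<Rightarrow> 'v"
  assumes L: "linear L" and V: "subspace V" and W: "subspace W" and LV: "L ` V \<subseteq> W"
  shows "dim (restr_adjoint V L ` W) = dim (L ` V)"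
proof -
  let ?Q = "\<lambda>y. orth_proj V (adjoint L y)"
  have eq: "restr_adjoint V L ` W = ?Q ` W" using restr_adjoint_eq[OF L V] by simp
  have Q: "linear ?Q" using linear_compose[OF adjoint_linear[OF L] orth_proj_linear[OF V]]
    by (simp add: o_def)
  have QW: "?Q ` W \<subseteq> V" using orth_proj_in[OF V] by auto
  have adj: "\<forall>a\<in>V. \<forall>b\<in>W. L a \<bullet> b = a \<bullet> ?Q b"
    using restr_adjoint_eq[OF L V] orth_proj_char[OF V]
  proof -
    have "L a \<bullet> b = a \<bullet> ?Q b" if "a \<in> V" for a b
    proof -
      have c: "\<forall>z\<in>V. (adjoint L b - ?Q b) \<bullet> z = 0" using orth_proj_char[OF V] by auto
      have "L a \<bullet> b = a \<bullet> adjoint L b" using adjoint_works[OF L] by simp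
      also have "\<dots> = a \<bullet> ?Q b"
      proof -
        have "(adjoint L b - ?Q b) \<bullet> a = 0" using c that by blast
        then show ?thesis by (metis inner_commute inner_diff_right right_minus_eq)
      qed
      finally show ?thesis .
    qed
    then show ?thesis by auto
  qed
  have 1: "dim (L ` V) \<le> dim (?Q ` W)" by (rule rank_le[OF V W L Q LV QW adj])
  have 2: "dim (?Q ` W) \<le> dim (L ` V)"
    by (rule rank_le[OF W V Q L QW LV]) (use adj in \<open>auto simp: inner_commute\<close>)
  show ?thesis using 1 2 eq by simp
qed

lemma restr_adjoint_cong:
  assumes "\<forall>x\<in>V. T x = L x"
  shows "restr_adjoint V T = restr_adjoint V L"
  unfolding restr_adjoint_def using assms by (auto intro!: ext arg_cong[where f=The])

lemma extend_linear:
  fixes T :: "'v::euclidean_space \<Rightarrow> 'v"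
  assumes V: "subspace V"
    and add: "\<And>x y. x \<in> V \<Longrightarrow> y \<in> V \<Longrightarrow> T (x + y) = T x + T y"
    and sc: "\<And>c x. x \<in> V \<Longrightarrow> T (c *\<^sub>R x) = c *\<^sub>R T x"
  obtains L where "linear L" "\<forall>x\<in>V. L x = T x"
proof -
  obtain B where B: "B \<subseteq> V" "independent B" "V \<subseteq> span B"
    using maximal_independent_subset by blast
  obtain L where L: "linear L" "\<forall>x\<in>B. L x = T x"
    using linear_independent_extend[OF B(2)] by blast
  have T0: "T 0 = 0" using sc[of 0 0] subspace_0[OF V] by simp
  have sub: "subspace {x \<in> V. L x = T x}"
    unfolding subspace_def using V L(1) add sc T0
    by (auto simp: subspace_0 subspace_add subspace_scale linear_add linear_scale linear_0
      intro: subspace_0)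
  have "span B \<subseteq> {x \<in> V. L x = T x}"
    by (rule span_minimal) (use B L sub in auto)
  then have "\<forall>x\<in>V. L x = T x" using B by auto
  with L that show ?thesis by blast
qed




locale bcc =
  fixes I :: "'i set" and deg :: "'i \<Rightarrow> nat" and Csp :: "'i \<Rightarrow> 'v::euclidean_space set"
    and bd :: "'v \<Rightarrow> 'v" and n :: nat and \<alpha> \<beta> :: 'i
  assumes B: "based_chain_complex I deg Csp bd"
    and SP: "single_pairing I deg Csp bd n \<alpha> \<beta>"
begin

lemma fin: "finite I" using B by (simp add: based_chain_complex_def)
lemma subsp: "\<sigma> \<in> I \<Longrightarrow> subspace (Csp \<sigma>)" using B by (simp add: based_chain_complex_def)
lemma orth: "\<sigma> \<in> I \<Longrightarrow> \<tau> \<in> I \<Longrightarrow> \<sigma> \<noteq> \<tau> \<Longrightarrow> x \<in> Csp \<sigma> \<Longrightarrow> y \<in> Csp \<tau> \<Longrightarrow> x \<bullet> y = 0"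
  using B by (simp add: based_chain_complex_def)
lemma lin: "linear bd" using B by (simp add: based_chain_complex_def)
lemma bdC: "\<sigma> \<in> I \<Longrightarrow> x \<in> Csp \<sigma> \<Longrightarrow> bd x \<in> (if deg \<sigma> = 0 then {0} else Cn I deg Csp (deg \<sigma> - 1))"
  using B by (simp add: based_chain_complex_def)
lemma bdbd: "x \<in> chain_space Csp I \<Longrightarrow> bd (bd x) = 0"
  using B by (simp add: based_chain_complex_def)

lemma aI: "\<alpha> \<in> I" and bI: "\<beta> \<in> I" and da: "deg \<alpha> = n + 1" and db: "deg \<beta> = n"
  and fbij: "bij_betw (bd_comp Csp bd \<beta>) (Csp \<alpha>) (Csp \<beta>)"
  using SP by (auto simp: single_pairing_def)

lemma ab: "\<alpha> \<noteq> \<beta>" using da db by auto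

lemma chain_sub: "subspace (chain_space Csp J)"
  by (simp add: chain_space_def subspace_span)

lemma chain_orth:
  assumes "J1 \<subseteq> I" "J2 \<subseteq> I" "J1 \<inter> J2 = {}" "x \<in> chain_space Csp J1" "y \<in> chain_space Csp J2"
  shows "x \<bullet> y = 0"
proof -
  have 1: "orthogonal u v" if "u \<in> (\<Union>\<sigma>\<in>J1. Csp \<sigma>)" "v \<in> (\<Union>\<sigma>\<in>J2. Csp \<sigma>)" for u v
    using that assms(1-3) orth unfolding orthogonal_def by blast
  have 2: "orthogonal u y" if "u \<in> (\<Union>\<sigma>\<in>J1. Csp \<sigma>)" for u
    using orthogonal_to_span[of y "\<Union>\<sigma>\<in>J2. Csp \<sigma>" u] 1[OF that] assms(5)
    by (simp add: chain_space_def)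
  have "orthogonal y x"
    using orthogonal_to_span[of x "\<Union>\<sigma>\<in>J1. Csp \<sigma>" y] 2 assms(4)
    by (simp add: chain_space_def orthogonal_commute)
  then show ?thesis by (simp add: orthogonal_def inner_commute)
qed

lemma chain_mono: "J1 \<subseteq> J2 \<Longrightarrow> chain_space Csp J1 \<subseteq> chain_space Csp J2"
  unfolding chain_space_def by (rule span_mono) auto

lemma Csp_chain: "\<sigma> \<in> J \<Longrightarrow> Csp \<sigma> \<subseteq> chain_space Csp J"
  unfolding chain_space_def by (meson UN_upper span_superset subset_trans)

lemma chain_single: "\<sigma> \<in> I \<Longrightarrow> chain_space Csp {\<sigma>} = Csp \<sigma>"
  unfolding chain_space_def using subsp by simp

lemma chain_Un: "chain_space Csp (J1 \<union> J2) = {x + y | x y. x \<in> chain_space Csp J1 \<and> y \<in> chain_space Csp J2}"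
  unfolding chain_space_def by (simp add: UN_Un span_Un)

abbreviation "R \<equiv> I - {\<alpha>, \<beta>}"
abbreviation "P \<equiv> orth_proj (chain_space Csp R)"
abbreviation "f \<equiv> bd_comp Csp bd \<beta>"
abbreviation "g \<equiv> inv_into (Csp \<alpha>) f"
abbreviation "C k \<equiv> Cn I deg Csp k"
abbreviation "M k \<equiv> CM I deg Csp \<alpha> \<beta> k"
abbreviation "pb \<equiv> orth_proj (Csp \<beta>)"

lemma f_eq: "f x = pb (bd x)" by (simp add: bd_comp_def)

lemma D_n1: "{\<sigma>\<in>I. deg \<sigma> = n + 1} = {\<sigma>\<in>R. deg \<sigma> = n + 1} \<union> {\<alpha>}"
  using aI da db by auto
lemma D_n: "{\<sigma>\<in>I. deg \<sigma> = n} = {\<sigma>\<in>R. deg \<sigma> = n} \<union> {\<beta>}"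
  using bI da db by auto
lemma D_other: "k \<noteq> n \<Longrightarrow> k \<noteq> n + 1 \<Longrightarrow> {\<sigma>\<in>I. deg \<sigma> = k} = {\<sigma>\<in>R. deg \<sigma> = k}"
  using da db by auto

lemma C_other: "k \<noteq> n \<Longrightarrow> k \<noteq> n + 1 \<Longrightarrow> C k = M k"
  unfolding Cn_def CM_def using D_other by simp

lemma C_n1: "C (n+1) = {x + y | x y. x \<in> M (n+1) \<and> y \<in> Csp \<alpha>}"
  unfolding Cn_def CM_def D_n1 chain_Un chain_single[OF aI] ..
lemma C_n: "C n = {x + y | x y. x \<in> M n \<and> y \<in> Csp \<beta>}"
  unfolding Cn_def CM_def D_n chain_Un chain_single[OF bI] ..

lemma M_sub_C: "M k \<subseteq> C k"
  unfolding Cn_def CM_def by (rule chain_mono) auto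
lemma M_sub_R: "M k \<subseteq> chain_space Csp R"
  unfolding CM_def by (rule chain_mono) auto
lemma C_sub_I: "C k \<subseteq> chain_space Csp I"
  unfolding Cn_def by (rule chain_mono) auto
lemma subM: "subspace (M k)" unfolding CM_def by (rule chain_sub)
lemma subC: "subspace (C k)" unfolding Cn_def by (rule chain_sub)
lemma subR: "subspace (chain_space Csp R)" by (rule chain_sub)

lemma alpha_orth_R: "a \<in> Csp \<alpha> \<Longrightarrow> \<forall>z\<in>chain_space Csp R. a \<bullet> z = 0"
  using chain_orth[of "{\<alpha>}" R] chain_single[OF aI] aI by auto
lemma beta_orth_R: "b \<in> Csp \<beta> \<Longrightarrow> \<forall>z\<in>chain_space Csp R. b \<bullet> z = 0"
  using chain_orth[of "{\<beta>}" R] chain_single[OF bI] bI by auto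

lemma P_id: "c \<in> chain_space Csp R \<Longrightarrow> P c = c"
  using orth_proj_id[OF subR] .
lemma P_alpha: "c \<in> chain_space Csp R \<Longrightarrow> a \<in> Csp \<alpha> \<Longrightarrow> P (c + a) = c"
  using orth_proj_add_orth[OF subR] alpha_orth_R by blast
lemma pb_beta: "c \<in> M k \<Longrightarrow> b \<in> Csp \<beta> \<Longrightarrow> pb (c + b) = b"
proof -
  assume c: "c \<in> M k" and b: "b \<in> Csp \<beta>"
  have "\<forall>z\<in>Csp \<beta>. c \<bullet> z = 0" using c M_sub_R beta_orth_R by (auto simp: inner_commute)
  then show ?thesis using orth_proj_add_orth[OF subsp[OF bI] b, of c] by (simp add: add.commute)
qed
lemma pb_zero: "J \<subseteq> I \<Longrightarrow> \<beta> \<notin> J \<Longrightarrow> y \<in> chain_space Csp J \<Longrightarrow> pb y = 0"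
proof -
  assume J: "J \<subseteq> I" "\<beta> \<notin> J" and y: "y \<in> chain_space Csp J"
  have "\<forall>z\<in>Csp \<beta>. y \<bullet> z = 0"
    using chain_orth[of J "{\<beta>}" y] J y chain_single[OF bI] bI by auto
  then show ?thesis using orth_proj_zero[OF subsp[OF bI]] by blast
qed

lemma pb_lin: "linear pb" using orth_proj_linear[OF subsp[OF bI]] .
lemma f_lin: "linear f"
proof -
  have "f = (\<lambda>x. pb (bd x))" by (rule ext) (simp add: bd_comp_def)
  then show ?thesis using linear_compose[OF lin pb_lin] by (simp add: o_def)
qed
lemma f_in: "f x \<in> Csp \<beta>" using orth_proj_in[OF subsp[OF bI]] by (simp add: bd_comp_def)

lemma inj_f: "inj_on f (Csp \<alpha>)" using fbij bij_betw_def by blast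
lemma g_in: "b \<in> Csp \<beta> \<Longrightarrow> g b \<in> Csp \<alpha>"
  using fbij by (metis bij_betw_def inv_into_into)
lemma fg: "b \<in> Csp \<beta> \<Longrightarrow> f (g b) = b"
  using fbij by (metis bij_betw_def f_inv_into_f)
lemma gf: "a \<in> Csp \<alpha> \<Longrightarrow> g (f a) = a"
  using inj_f by (rule inv_into_f_f)
lemma f_zero_imp: "a \<in> Csp \<alpha> \<Longrightarrow> f a = 0 \<Longrightarrow> a = 0"
  using inj_f subspace_0[OF subsp[OF aI]] linear_0[OF f_lin] by (metis inj_on_def)
lemma g0: "g 0 = 0"
  using gf[of 0] subspace_0[OF subsp[OF aI]] linear_0[OF f_lin] by simp

lemma g_add: "b1 \<in> Csp \<beta> \<Longrightarrow> b2 \<in> Csp \<beta> \<Longrightarrow> g (b1 + b2) = g b1 + g b2"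
proof -
  assume b: "b1 \<in> Csp \<beta>" "b2 \<in> Csp \<beta>"
  have s: "g b1 + g b2 \<in> Csp \<alpha>" using g_in b subspace_add[OF subsp[OF aI]] by blast
  have "f (g b1 + g b2) = b1 + b2" using linear_add[OF f_lin] fg b by simp
  then show ?thesis using gf[OF s] by simp
qed
lemma g_scale: "b \<in> Csp \<beta> \<Longrightarrow> g (c *\<^sub>R b) = c *\<^sub>R g b"
proof -
  assume b: "b \<in> Csp \<beta>"
  have s: "c *\<^sub>R g b \<in> Csp \<alpha>" using g_in b subspace_scale[OF subsp[OF aI]] by blast
  have "f (c *\<^sub>R g b) = c *\<^sub>R b" using linear_scale[OF f_lin] fg b by simp
  then show ?thesis using gf[OF s] by simp
qed

abbreviation "mb \<equiv> morse_bd I Csp bd \<alpha> \<beta>"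

lemma mb_eq: "mb x = P (bd x - bd (g (f x)))" by (simp add: morse_bd_def)

lemma gf_lin: "linear (\<lambda>x. g (f x))"
proof (rule linearI)
  fix x y show "g (f (x + y)) = g (f x) + g (f y)"
    using linear_add[OF f_lin] g_add f_in by simp
next
  fix c :: real and x show "g (f (c *\<^sub>R x)) = c *\<^sub>R g (f x)"
    using linear_scale[OF f_lin] g_scale f_in by simp
qed

lemma mb_lin: "linear mb"
proof -
  have "linear (\<lambda>x. bd x - bd (g (f x)))"
    using linear_compose_sub[OF lin linear_compose[OF gf_lin lin]] by (simp add: o_def)
  then have "linear (\<lambda>x. P (bd x - bd (g (f x))))"
    using linear_compose[OF _ orth_proj_linear[OF subR]] by (simp add: o_def)
  then show ?thesis by (simp add: morse_bd_def[abs_def])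
qed

lemma bd_C: "x \<in> C k \<Longrightarrow> bd x \<in> C (k - 1) \<and> (k = 0 \<longrightarrow> bd x = 0)"
proof -
  assume x: "x \<in> C k"
  let ?U = "\<Union>\<sigma>\<in>{\<sigma>\<in>I. deg \<sigma> = k}. Csp \<sigma>"
  have "bd ` ?U \<subseteq> (if k = 0 then {0} else C (k - 1))"
    using bdC by fastforce
  then have "span (bd ` ?U) \<subseteq> (if k = 0 then {0} else C (k - 1))"
    using span_minimal[of "bd ` ?U"] subC subspace_0 span_empty
    by (cases "k = 0") (auto simp: span_minimal)
  moreover have "bd x \<in> span (bd ` ?U)"
    using x span_linear_image[OF lin, of ?U] by (auto simp: Cn_def chain_space_def)
  ultimately have "bd x \<in> (if k = 0 then {0} else C (k - 1))" by blast
  moreover have "0 \<in> C (k - 1)" using subC subspace_0 by blast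
  ultimately show ?thesis by (cases "k = 0") auto
qed

end



context bcc begin

lemma a_in_C: "a \<in> Csp \<alpha> \<Longrightarrow> a \<in> C (n+1)"
proof -
  assume a: "a \<in> Csp \<alpha>"
  have "0 \<in> M (n+1)" using subM subspace_0 by blast
  then show ?thesis using a C_n1 by force
qed

lemma mb_simple: "x \<in> M k \<Longrightarrow> k \<noteq> n + 1 \<Longrightarrow> mb x = P (bd x)"
proof -
  assume x: "x \<in> M k" and k: "k \<noteq> n + 1"
  have xC: "x \<in> C k" using x M_sub_C by blast
  have "f x = 0"
  proof (cases "k = 0")
    case True
    then have "bd x = 0" using bd_C[OF xC] by simp
    then show ?thesis using f_eq linear_0[OF pb_lin] by simp
  next
    case False
    have "bd x \<in> chain_space Csp {\<sigma>\<in>I. deg \<sigma> = k - 1}" using bd_C[OF xC] by (simp add: Cn_def)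
    moreover have "\<beta> \<notin> {\<sigma>\<in>I. deg \<sigma> = k - 1}" using db k False by auto
    ultimately show ?thesis using pb_zero[of "{\<sigma>\<in>I. deg \<sigma> = k - 1}"] f_eq by auto
  qed
  then show ?thesis using mb_eq g0 linear_0[OF lin] by simp
qed

lemma mb_other: "x \<in> M k \<Longrightarrow> k \<noteq> n + 1 \<Longrightarrow> k \<noteq> n + 2 \<Longrightarrow> mb x = bd x \<and> bd x \<in> M (k - 1)"
proof -
  assume x: "x \<in> M k" and k: "k \<noteq> n + 1" "k \<noteq> n + 2"
  have xC: "x \<in> C k" using x M_sub_C by blast
  have "bd x \<in> M (k - 1)"
  proof (cases "k = 0")
    case True
    then show ?thesis using bd_C[OF xC] subM subspace_0 by auto
  next
    case False
    then show ?thesis using bd_C[OF xC] C_other[of "k - 1"] k by auto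
  qed
  moreover from this have "bd x \<in> chain_space Csp R" using M_sub_R by blast
  then have "P (bd x) = bd x" by (rule P_id)
  ultimately show ?thesis using mb_simple[OF x k(1)] by simp
qed

lemma mb_n1: "x \<in> M (n+1) \<Longrightarrow> mb x = bd (x - g (f x)) \<and> mb x \<in> M n"
proof -
  assume x: "x \<in> M (n+1)"
  define a where "a = g (f x)"
  have a: "a \<in> Csp \<alpha>" using g_in f_in a_def by simp
  have fa: "f a = f x" using fg f_in a_def by simp
  have xa: "x - a \<in> C (n+1)" using x M_sub_C a_in_C[OF a] subC subspace_diff by blast
  define u where "u = bd (x - a)"
  have u: "u = bd x - bd a" using u_def linear_diff[OF lin] by simp
  have "u \<in> C n" using bd_C[OF xa] u_def by simp
  then obtain c b where cb: "c \<in> M n" "b \<in> Csp \<beta>" "u = c + b" using C_n by blast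
  have "pb u = b" using pb_beta[OF cb(1,2)] cb(3) by simp
  moreover have "pb u = 0" using u linear_diff[OF pb_lin] f_eq fa by simp
  ultimately have "u = c" using cb by simp
  then have "u \<in> M n" "P u = u" using cb P_id M_sub_R by auto
  then show ?thesis using mb_eq a_def u u_def by simp
qed

lemma mb_tgt: "x \<in> M k \<Longrightarrow> mb x \<in> CM_tgt I deg Csp \<alpha> \<beta> k"
proof -
  assume x: "x \<in> M k"
  consider "k = n + 1" | "k = n + 2" | "k \<noteq> n + 1" "k \<noteq> n + 2" by blast
  then show ?thesis
  proof cases
    case 1
    have "mb x \<in> M n" using mb_n1[OF x[unfolded 1]] by blast
    then show ?thesis by (simp add: CM_tgt_def 1)
  next
    case 2
    have xC: "x \<in> C (n+1+1)" using x M_sub_C 2 by auto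
    have "bd x \<in> C (n+1)" using bd_C[OF xC] by simp
    then obtain c a where ca: "c \<in> M (n+1)" "a \<in> Csp \<alpha>" "bd x = c + a" using C_n1 by blast
    have "mb x = c" using mb_simple[OF x] 2 P_alpha ca M_sub_R by auto
    then show ?thesis using ca 2 by (simp add: CM_tgt_def)
  next
    case 3
    then have "mb x \<in> M (k - 1)" using mb_other[OF x] by simp
    moreover have "mb x = 0" if k0: "k = 0"
    proof -
      have "x \<in> C k" using x M_sub_C by blast
      then have "bd x = 0" using bd_C k0 by blast
      then show ?thesis using mb_other[OF x 3] by simp
    qed
    ultimately show ?thesis by (simp add: CM_tgt_def)
  qed
qed

lemma img_other: "k \<noteq> n \<Longrightarrow> k \<noteq> n + 1 \<Longrightarrow> k \<noteq> n + 2 \<Longrightarrow> mb ` M k = bd ` C k"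
proof -
  assume k: "k \<noteq> n" "k \<noteq> n + 1" "k \<noteq> n + 2"
  have "mb ` M k = bd ` M k" using mb_other[of _ k] k by (intro image_cong) auto
  then show ?thesis using C_other[of k] k by simp
qed

lemma img_n: "mb ` M n = bd ` C n"
proof -
  have e: "mb ` M n = bd ` M n" using mb_other[of _ n] by (intro image_cong) auto
  have "bd ` C n \<subseteq> bd ` M n"
  proof
    fix v assume "v \<in> bd ` C n"
    then obtain y where y: "y \<in> C n" "v = bd y" by auto
    then obtain y1 b where yb: "y1 \<in> M n" "b \<in> Csp \<beta>" "y = y1 + b" using C_n by blast
    define a where "a = g b"
    have a: "a \<in> Csp \<alpha>" "f a = b" using g_in fg yb a_def by auto
    have "bd a \<in> C n" using bd_C[OF a_in_C[OF a(1)]] by simp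
    then obtain c b' where cb: "c \<in> M n" "b' \<in> Csp \<beta>" "bd a = c + b'" using C_n by blast
    have "b' = b" using pb_beta[OF cb(1,2)] cb(3) a(2) f_eq by simp
    have "bd (bd a) = 0" using bdbd a_in_C[OF a(1)] C_sub_I by blast
    then have h: "bd c + bd b = 0" using cb \<open>b' = b\<close> linear_add[OF lin] by metis
    have "v = bd y1 + bd b" using y yb linear_add[OF lin] by metis
    also have "\<dots> = bd y1 - bd c" using h by (metis add_diff_cancel_left' diff_minus_eq_add diff_0 add.commute)
    also have "\<dots> = bd (y1 - c)" using linear_diff[OF lin] by metis
    finally have "v = bd (y1 - c)" .
    moreover have "y1 - c \<in> M n" using yb cb subM subspace_diff by blast
    ultimately show "v \<in> bd ` M n" by blast
  qed
  moreover have "bd ` M n \<subseteq> bd ` C n" using M_sub_C by blast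
  ultimately show ?thesis using e by blast
qed

lemma img_n2: "dim (mb ` M (n+2)) = dim (bd ` C (n+2))"
proof -
  have MC: "M (n+2) = C (n+2)" using C_other[of "n+2"] by simp
  have "mb ` M (n+2) = (\<lambda>x. P (bd x)) ` M (n+2)" using mb_simple[of _ "n+2"] by (intro image_cong) auto
  then have e: "mb ` M (n+2) = P ` (bd ` C (n+2))" using MC by (simp add: image_image)
  have S: "subspace (bd ` C (n+2))" using linear_subspace_image[OF lin subC] .
  have inj: "inj_on P (bd ` C (n+2))"
    unfolding linear_inj_on_iff_eq_0[OF orth_proj_linear[OF subR] S]
  proof (intro ballI impI)
    fix v assume v: "v \<in> bd ` C (n+2)" and P0: "P v = 0"
    then obtain y where y: "y \<in> C (n+2)" "v = bd y" by blast
    have "v \<in> C (n+2-1)" using bd_C[OF y(1)] y by blast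
    then have "v \<in> C (n+1)" by simp
    then obtain c a where ca: "c \<in> M (n+1)" "a \<in> Csp \<alpha>" "v = c + a" using C_n1 by blast
    have "P v = c" using P_alpha[of c a] ca M_sub_R by blast
    then have "c = 0" using P0 by simp
    have "bd v = 0" using bdbd y C_sub_I by blast
    then have "bd a = 0" using ca \<open>c = 0\<close> by simp
    then have "f a = 0" using f_eq linear_0[OF pb_lin] by simp
    then have "a = 0" using f_zero_imp ca by blast
    then show "v = 0" using ca \<open>c = 0\<close> by simp
  qed
  have sp: "span (bd ` C (n+2)) = bd ` C (n+2)" using S by (rule span_eq_iff[THEN iffD2])
  have inj': "inj_on P (span (bd ` C (n+2)))" unfolding sp by (rule inj)
  have "dim (P ` (bd ` C (n+2))) = dim (bd ` C (n+2))"
    using dim_image_eq[OF orth_proj_linear[OF subR] inj'] .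
  then show ?thesis unfolding e .
qed

lemma img_n1: "dim (mb ` M (n+1)) = dim (bd ` C (n+1)) - dim (Csp \<beta>)"
proof -
  define A where "A = {u \<in> bd ` C (n+1). pb u = 0}"
  define Ba where "Ba = bd ` Csp \<alpha>"
  have SC: "subspace (bd ` C (n+1))" using linear_subspace_image[OF lin subC] .
  have Sa: "subspace (Csp \<alpha>)" using subsp[OF aI] .
  have Sb: "subspace (Csp \<beta>)" using subsp[OF bI] .
  have SBa: "subspace Ba" unfolding Ba_def using linear_subspace_image[OF lin Sa] .
  have SA: "subspace A"
  proof -
    have "A = bd ` C (n+1) \<inter> {u. pb u = 0}" unfolding A_def by blast
    moreover have "subspace {u. pb u = 0}"
      unfolding subspace_def using linear_0[OF pb_lin] linear_add[OF pb_lin] linear_scale[OF pb_lin] by simp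
    ultimately show ?thesis using SC subspace_inter by blast
  qed
  have mbA: "mb ` M (n+1) = A"
  proof
    show "mb ` M (n+1) \<subseteq> A"
    proof
      fix v assume "v \<in> mb ` M (n+1)"
      then obtain x where x: "x \<in> M (n+1)" "v = mb x" by blast
      have e: "mb x = bd (x - g (f x))" "mb x \<in> M n" using mb_n1[OF x(1)] by auto
      have "g (f x) \<in> C (n+1)" using a_in_C g_in f_in by blast
      then have "x - g (f x) \<in> C (n+1)" using x(1) M_sub_C subC subspace_diff by blast
      then have "mb x \<in> bd ` C (n+1)" using e(1) by blast
      moreover have "mb x \<in> chain_space Csp R" using e(2) M_sub_R by blast
      then have "pb (mb x) = 0" by (intro pb_zero[of R]) auto
      ultimately show "v \<in> A" unfolding A_def using x(2) by blast
    qed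
  next
    show "A \<subseteq> mb ` M (n+1)"
    proof
      fix u assume "u \<in> A"
      then obtain y where y: "y \<in> C (n+1)" "u = bd y" "pb u = 0" unfolding A_def by blast
      then obtain x a where xa: "x \<in> M (n+1)" "a \<in> Csp \<alpha>" "y = x + a" using C_n1 by blast
      have "bd x = u - bd a" using y(2) xa(3) linear_add[OF lin] by (simp add: algebra_simps)
      then have "f x = pb u - f a" using f_eq linear_diff[OF pb_lin] by simp
      also have "\<dots> = f (- a)" using y(3) linear_neg[OF f_lin] by simp
      finally have "g (f x) = - a" using gf subspace_neg[OF Sa xa(2)] by simp
      then have "mb x = bd (x + a)" using mb_n1[OF xa(1)] by simp
      then have "mb x = u" using y(2) xa(3) by simp
      then show "u \<in> mb ` M (n+1)" using xa(1) by blast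
    qed
  qed
  have sum: "{x + y |x y. x \<in> A \<and> y \<in> Ba} = bd ` C (n+1)"
  proof
    show "{x + y |x y. x \<in> A \<and> y \<in> Ba} \<subseteq> bd ` C (n+1)"
    proof
      fix w assume "w \<in> {x + y |x y. x \<in> A \<and> y \<in> Ba}"
      then obtain x y where "x \<in> A" "y \<in> Ba" "w = x + y" by blast
      then have "x \<in> bd ` C (n+1)" "y \<in> bd ` C (n+1)" unfolding A_def Ba_def using a_in_C by auto
      then show "w \<in> bd ` C (n+1)" using \<open>w = x + y\<close> SC subspace_add by blast
    qed
  next
    show "bd ` C (n+1) \<subseteq> {x + y |x y. x \<in> A \<and> y \<in> Ba}"
    proof
      fix u assume u: "u \<in> bd ` C (n+1)"
      define a where "a = g (pb u)"
      have a: "a \<in> Csp \<alpha>" "f a = pb u" using g_in fg orth_proj_in[OF Sb] a_def by auto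
      have "bd a \<in> bd ` C (n+1)" using a_in_C[OF a(1)] by blast
      then have "u - bd a \<in> bd ` C (n+1)" using u SC subspace_diff by blast
      moreover have "pb (u - bd a) = 0" using a(2) f_eq linear_diff[OF pb_lin] by simp
      ultimately have "u - bd a \<in> A" unfolding A_def by blast
      moreover have "bd a \<in> Ba" unfolding Ba_def using a(1) by blast
      ultimately show "u \<in> {x + y |x y. x \<in> A \<and> y \<in> Ba}"
        by (metis (mono_tags, lifting) diff_add_cancel mem_Collect_eq)
    qed
  qed
  have int: "A \<inter> Ba = {0}"
  proof
    show "A \<inter> Ba \<subseteq> {0}"
    proof
      fix v assume "v \<in> A \<inter> Ba"
      then obtain a where a: "a \<in> Csp \<alpha>" "v = bd a" "pb v = 0" unfolding A_def Ba_def by blast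
      then have "f a = 0" using f_eq by simp
      then have "a = 0" using f_zero_imp a(1) by blast
      then show "v \<in> {0}" using a(2) linear_0[OF lin] by simp
    qed
  next
    show "{0} \<subseteq> A \<inter> Ba" using subspace_0[OF SA] subspace_0[OF SBa] by blast
  qed
  have injbd: "inj_on bd (span (Csp \<alpha>))"
  proof -
    have sp: "span (Csp \<alpha>) = Csp \<alpha>" using Sa by (rule span_eq_iff[THEN iffD2])
    have "inj_on bd (Csp \<alpha>)"
      unfolding linear_inj_on_iff_eq_0[OF lin Sa]
    proof (intro ballI impI)
      fix a assume "a \<in> Csp \<alpha>" "bd a = 0"
      then have "f a = 0" using f_eq linear_0[OF pb_lin] by simp
      then show "a = 0" using f_zero_imp \<open>a \<in> Csp \<alpha>\<close> by blast
    qed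
    then show ?thesis unfolding sp .
  qed
  have dBa: "dim Ba = dim (Csp \<alpha>)" unfolding Ba_def using dim_image_eq[OF lin injbd] .
  have injf: "inj_on f (span (Csp \<alpha>))"
  proof -
    have sp: "span (Csp \<alpha>) = Csp \<alpha>" using Sa by (rule span_eq_iff[THEN iffD2])
    show ?thesis unfolding sp by (rule inj_f)
  qed
  have "f ` Csp \<alpha> = Csp \<beta>" using fbij by (simp add: bij_betw_def)
  then have dab: "dim (Csp \<beta>) = dim (Csp \<alpha>)" using dim_image_eq[OF f_lin injf] by simp
  have "dim {x + y |x y. x \<in> A \<and> y \<in> Ba} + dim (A \<inter> Ba) = dim A + dim Ba"
    using dim_sums_Int[OF SA SBa] .
  then have "dim (bd ` C (n+1)) = dim A + dim (Csp \<beta>)" unfolding sum int using dBa dab by simp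
  then show ?thesis unfolding mbA by simp
qed

end

theorem mainTheorem14:
  fixes I :: "'i set" and deg :: "'i \<Rightarrow> nat" and Csp :: "'i \<Rightarrow> 'v::euclidean_space set"
    and bd :: "'v \<Rightarrow> 'v" and n :: nat and \<alpha> \<beta> :: 'i
  assumes "based_chain_complex I deg Csp bd"
    and "single_pairing I deg Csp bd n \<alpha> \<beta>"
  shows "\<forall>i. dim (restr_adjoint (CM I deg Csp \<alpha> \<beta> i) (morse_bd I Csp bd \<alpha> \<beta>)
                    ` CM_tgt I deg Csp \<alpha> \<beta> i)
            = dim (morse_bd I Csp bd \<alpha> \<beta> ` CM I deg Csp \<alpha> \<beta> i)
          \<and> dim (morse_bd I Csp bd \<alpha> \<beta> ` CM I deg Csp \<alpha> \<beta> i)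
            = (if i = n + 1 then dim (bd ` Cn I deg Csp i) - dim (Csp \<beta>)
               else dim (bd ` Cn I deg Csp i))"
proof -
  interpret bcc I deg Csp bd n \<alpha> \<beta> using assms by (rule bcc.intro)
  show ?thesis
  proof
    fix i
    have St: "subspace (CM_tgt I deg Csp \<alpha> \<beta> i)"
      unfolding CM_tgt_def using subM subspace_single_0 by simp
    have tg: "mb ` M i \<subseteq> CM_tgt I deg Csp \<alpha> \<beta> i" using mb_tgt by blast
    have 1: "dim (restr_adjoint (M i) mb ` CM_tgt I deg Csp \<alpha> \<beta> i) = dim (mb ` M i)"
      by (rule adj_rank[OF mb_lin subM St tg])
    have 2: "dim (mb ` M i) = (if i = n + 1 then dim (bd ` C i) - dim (Csp \<beta>) else dim (bd ` C i))"
    proof -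
      consider "i = n + 1" | "i = n" | "i = n + 2" | "i \<noteq> n" "i \<noteq> n + 1" "i \<noteq> n + 2" by blast
      then show ?thesis
      proof cases
        case 1 then show ?thesis using img_n1 by simp
      next
        case 2 then show ?thesis using img_n by simp
      next
        case 3 then show ?thesis using img_n2 by simp
      next
        case 4 then show ?thesis using img_other[OF 4] by simp
      qed
    qed
    show "dim (restr_adjoint (M i) mb ` CM_tgt I deg Csp \<alpha> \<beta> i) = dim (mb ` M i)
          \<and> dim (mb ` M i) = (if i = n + 1 then dim (bd ` C i) - dim (Csp \<beta>) else dim (bd ` C i))"
      using 1 2 by blast
  qed
qed

end
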